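(* Let $G$ be a permutation graph or a near-permutation graph on $n$ vertices whose odd girth equals $\frac{n}{2}$. If $G$ is not $3$-edge-colourable, then $G$ is isomorphic to the Petersen graph or to the Petersen graph minus one edge.
   Context: All graphs are finite and simple. A cubic graph $G$ on $n$ vertices is a permutation graph if $G$ has a perfect matching $M$ such that $G-M$ (deleting the edges of $M$) is the disjoint union of two chordless cycles $A$ and $B$, each of length $\frac{n}{2}$. A near-permutation graph is a graph obtained from such a permutation graph by deleting one edge of the perfect matching $M$. The odd girth of a graph is the length of a shortest odd cycle. A graph is $3$-edge-colourable if it admits a proper edge-colouring with $3$ colours. *)

theory Defs
  imports Main "HOL-Library.Extended_Nat"
begin

definition simple_graph :: "'a set \<Rightarrow> 'a set set \<Rightarrow> bool" where
  "simple_graph V E \<longleftrightarrow> finite V \<and>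
     (\<forall>e\<in>E. \<exists>u v. u \<noteq> v \<and> u \<in> V \<and> v \<in> V \<and> e = {u, v})"

definition degree :: "'a set set \<Rightarrow> 'a \<Rightarrow> nat" where
  "degree E v = card {e\<in>E. v \<in> e}"

definition cubic :: "'a set \<Rightarrow> 'a set set \<Rightarrow> bool" where
  "cubic V E \<longleftrightarrow> simple_graph V E \<and> (\<forall>v\<in>V. degree E v = 3)"

definition perfect_matching :: "'a set \<Rightarrow> 'a set set \<Rightarrow> 'a set set \<Rightarrow> bool" where
  "perfect_matching V E M \<longleftrightarrow> M \<subseteq> E \<and> (\<forall>v\<in>V. \<exists>!e. e \<in> M \<and> v \<in> e)"

definition cycle_graph :: "'a set \<Rightarrow> 'a set set \<Rightarrow> nat \<Rightarrow> bool" where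
  "cycle_graph W F k \<longleftrightarrow> k \<ge> 3 \<and>
     (\<exists>f. bij_betw f {0..<k} W \<and> F = {{f i, f ((i + 1) mod k)} | i. i < k})"

definition chordless_in :: "'a set set \<Rightarrow> 'a set \<Rightarrow> 'a set set \<Rightarrow> bool" where
  "chordless_in E W F \<longleftrightarrow> (\<forall>e\<in>E. e \<subseteq> W \<longrightarrow> e \<in> F)"

definition permutation_graph_wrt :: "'a set \<Rightarrow> 'a set set \<Rightarrow> 'a set set \<Rightarrow> bool" where
  "permutation_graph_wrt V E M \<longleftrightarrow> cubic V E \<and> perfect_matching V E M \<and>
     (\<exists>VA EA VB EB. V = VA \<union> VB \<and> VA \<inter> VB = {} \<and> E - M = EA \<union> EB \<and>
        cycle_graph VA EA (card V div 2) \<and> cycle_graph VB EB (card V div 2) \<and>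
        chordless_in E VA EA \<and> chordless_in E VB EB)"

definition permutation_graph :: "'a set \<Rightarrow> 'a set set \<Rightarrow> bool" where
  "permutation_graph V E \<longleftrightarrow> (\<exists>M. permutation_graph_wrt V E M)"

definition near_permutation_graph :: "'a set \<Rightarrow> 'a set set \<Rightarrow> bool" where
  "near_permutation_graph V E \<longleftrightarrow>
     (\<exists>E' M e. permutation_graph_wrt V E' M \<and> e \<in> M \<and> E = E' - {e})"

definition has_cycle :: "'a set \<Rightarrow> 'a set set \<Rightarrow> nat \<Rightarrow> bool" where
  "has_cycle V E k \<longleftrightarrow> k \<ge> 3 \<and>
     (\<exists>f. inj_on f {0..<k} \<and> f ` {0..<k} \<subseteq> V \<and>
          (\<forall>i<k. {f i, f ((i + 1) mod k)} \<in> E))"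

definition odd_girth :: "'a set \<Rightarrow> 'a set set \<Rightarrow> enat" where
  "odd_girth V E = (if \<exists>k. odd k \<and> has_cycle V E k
                    then enat (LEAST k. odd k \<and> has_cycle V E k) else \<infinity>)"

definition three_edge_colourable :: "'a set set \<Rightarrow> bool" where
  "three_edge_colourable E \<longleftrightarrow> (\<exists>c :: 'a set \<Rightarrow> nat. (\<forall>e\<in>E. c e < 3) \<and>
     (\<forall>e\<in>E. \<forall>e'\<in>E. e \<noteq> e' \<and> e \<inter> e' \<noteq> {} \<longrightarrow> c e \<noteq> c e'))"

definition graph_iso :: "'a set \<Rightarrow> 'a set set \<Rightarrow> 'b set \<Rightarrow> 'b set set \<Rightarrow> bool" where
  "graph_iso V E V' E' \<longleftrightarrow> (\<exists>f. bij_betw f V V' \<and>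
     (\<forall>u\<in>V. \<forall>v\<in>V. {u, v} \<in> E \<longleftrightarrow> {f u, f v} \<in> E'))"

text \<open>Petersen graph on {0..9}: outer 5-cycle, spokes, inner pentagram.\<close>
definition petersen_V :: "nat set" where
  "petersen_V = {0..<10}"

definition petersen_E :: "nat set set" where
  "petersen_E = {{i, (i + 1) mod 5} | i. i < 5} \<union> {{i, i + 5} | i. i < 5}
                \<union> {{i + 5, (i + 2) mod 5 + 5} | i. i < 5}"

end

theory Submission
  imports Defs
begin

definition col :: "nat \<Rightarrow> int \<Rightarrow> nat" where
  "col \<beta> p = (if p = 0 then 2 else if odd p then \<beta> else 1 - \<beta>)"

lemma col_lt: "\<beta> \<le> 1 \<Longrightarrow> col \<beta> p < 3"
  unfolding col_def by (cases "p=0"; cases "odd p"; simp)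

lemma modk_1: "3 \<le> (k::int) \<Longrightarrow> 1 mod k = 1" by simp

lemma mod_eq_dvd: "x mod (k::int) = y mod k \<longleftrightarrow> k dvd x - y"
  by (simp add: mod_eq_dvd_iff)

lemma succ_mod: "0 \<le> p \<Longrightarrow> p < (k::int) \<Longrightarrow> (p + 1) mod k = (if p + 1 = k then 0 else p + 1)"
  by auto

lemma col_next:
  assumes "0 \<le> p" "p < k" "odd k" "3 \<le> k" "\<beta> \<le> 1"
  shows "col \<beta> p \<noteq> col \<beta> ((p+1) mod k)"
proof -
  have b: "\<beta> \<noteq> 1 - \<beta>" "\<beta> \<noteq> 2" "1 - \<beta> \<noteq> 2" using assms(5) by arith+
  show ?thesis
  proof (cases "p + 1 = k")
    case True
    then have "even p" "p \<noteq> 0" using assms by auto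
    then have "col \<beta> p = 1 - \<beta>" by (simp add: col_def)
    moreover have "col \<beta> ((p+1) mod k) = 2" using True by (simp add: col_def)
    ultimately show ?thesis using b by simp
  next
    case False
    then have q: "(p+1) mod k = p + 1" using assms by auto
    have nz: "p + 1 \<noteq> 0" using assms by simp
    show ?thesis
    proof (cases "p = 0")
      case True
      then show ?thesis using q b by (simp add: col_def)
    next
      case p0: False
      show ?thesis
      proof (cases "odd p")
        case True
        then have "col \<beta> p = \<beta>" "col \<beta> (p+1) = 1 - \<beta>" using p0 nz by (simp_all add: col_def)
        then show ?thesis using q b by simp
      next
        case False
        then have "col \<beta> p = 1 - \<beta>" "col \<beta> (p+1) = \<beta>" using p0 nz by (simp_all add: col_def)
        then show ?thesis using q b by simp
      qed
    qed
  qed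
qed

lemma edge_uniq:
  assumes ceq: "\<And>x y. c x = c y \<longleftrightarrow> x mod k = y mod (k::int)" and k3: "3 \<le> k"
    and "{c x, c (x+1)} = {c y, c (y+1)}"
  shows "k dvd x - y"
proof -
  have "c x = c y \<or> (c x = c (y+1) \<and> c (x+1) = c y)" using assms(3) by (auto simp: doubleton_eq_iff)
  then show ?thesis
  proof
    assume "c x = c y" then show ?thesis using ceq mod_eq_dvd by blast
  next
    assume "c x = c (y+1) \<and> c (x+1) = c y"
    then have "k dvd x - (y+1)" "k dvd (x+1) - y" using ceq mod_eq_dvd by blast+
    then have "k dvd ((x+1) - y) - (x - (y+1))" using dvd_diff by blast
    then have "k dvd 2" by simp
    then have "k \<le> 2" using zdvd_imp_le by fastforce
    then show ?thesis using k3 by simp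
  qed
qed

lemma cyc_colour:
  fixes c :: "int \<Rightarrow> 'a" and k t :: int and \<beta> :: nat
  assumes k3: "3 \<le> k" and ok: "odd k" and ceq: "\<And>x y. c x = c y \<longleftrightarrow> x mod k = y mod k"
    and bb: "\<beta> \<le> 1"
  shows "\<exists>cc. (\<forall>e\<in>{{c x, c (x+1)} | x. True}. cc e < (3::nat)) \<and>
     (\<forall>e\<in>{{c x, c (x+1)} | x. True}. \<forall>e'\<in>{{c x, c (x+1)} | x. True}. e \<noteq> e' \<and> e \<inter> e' \<noteq> {} \<longrightarrow> cc e \<noteq> cc e') \<and>
     (\<forall>e\<in>{{c x, c (x+1)} | x. True}. \<forall>v\<in>e. cc e \<noteq> (if v = c t then \<beta> else if v = c (t+1) then 1 - \<beta> else 2))"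
proof -
  define cc where "cc e = col \<beta> (((SOME x. e = {c x, c (x+1)}) - t) mod k)" for e
  have cce: "cc {c x, c (x+1)} = col \<beta> ((x - t) mod k)" for x
  proof -
    let ?y = "SOME y. {c x, c (x+1)} = {c y, c (y+1)}"
    have "{c x, c (x+1)} = {c ?y, c (?y+1)}" by (rule someI[of _ x]) simp
    then have "k dvd x - ?y" by (rule edge_uniq[OF ceq k3])
    then have "(x - t) mod k = (?y - t) mod k" by (simp add: mod_eq_dvd)
    then show ?thesis by (simp add: cc_def)
  qed
  have mi: "(if c y = c t then \<beta> else if c y = c (t+1) then 1 - \<beta> else 2) =
      (if (y - t) mod k = 0 then \<beta> else if (y - t) mod k = 1 then 1 - \<beta> else 2)" for y
  proof -
    have "c y = c t \<longleftrightarrow> (y - t) mod k = 0" using ceq[of y t] by (simp add: mod_eq_dvd dvd_eq_mod_eq_0)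
    moreover have "c y = c (t+1) \<longleftrightarrow> (y - t) mod k = 1"
    proof -
      have "c y = c (t+1) \<longleftrightarrow> (y - t) mod k = 1 mod k" using ceq[of y "t+1"] by (simp add: mod_eq_dvd algebra_simps)
      then show ?thesis using k3 by simp
    qed
    ultimately show ?thesis by simp
  qed
  have nxt: "(y - t) mod k = ((x - t) mod k + 1) mod k" if "k dvd y - x - 1" for x y
  proof -
    have "((x - t) mod k + 1) mod k = (x - t + 1) mod k" by (simp add: mod_add_left_eq)
    also have "\<dots> = (y - t) mod k"
    proof -
      have "(x - t + 1) - (y - t) = - (y - x - 1)" by simp
      then have "k dvd (x - t + 1) - (y - t)" using that by (simp only: dvd_minus_iff)
      then show ?thesis by (simp only: mod_eq_dvd)
    qed
    finally show ?thesis by simp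
  qed
  have pr: "0 \<le> (x - t) mod k" "(x - t) mod k < k" for x using k3 by auto
  show ?thesis
  proof (intro exI[of _ cc] conjI ballI impI)
    fix e assume "e \<in> {{c x, c (x+1)} | x. True}"
    then obtain x where e: "e = {c x, c (x+1)}" by auto
    show "cc e < 3" using bb by (simp add: e cce col_lt)
  next
    fix e e' assume "e \<in> {{c x, c (x+1)} | x. True}" "e' \<in> {{c x, c (x+1)} | x. True}"
      and ne: "e \<noteq> e' \<and> e \<inter> e' \<noteq> {}"
    then obtain x y where e: "e = {c x, c (x+1)}" and e': "e' = {c y, c (y+1)}" by auto
    have nd: "\<not> k dvd x - y"
    proof
      assume "k dvd x - y"
      then have "c x = c y" "c (x+1) = c (y+1)" using ceq by (simp_all add: mod_eq_dvd)
      then show False using ne e e' by simp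
    qed
    have "k dvd y - x - 1 \<or> k dvd x - y - 1"
    proof -
      from ne obtain v where "v \<in> e" "v \<in> e'" by auto
      then have "(c x = c y \<or> c x = c (y+1) \<or> c (x+1) = c y \<or> c (x+1) = c (y+1))" using e e' by auto
      then show ?thesis using nd ceq by (auto simp: mod_eq_dvd algebra_simps)
    qed
    then show "cc e \<noteq> cc e'"
    proof
      assume "k dvd y - x - 1"
      then show ?thesis using col_next[OF pr(1)[of x] pr(2)[of x] ok k3 bb] nxt[of y x] by (simp add: e e' cce)
    next
      assume "k dvd x - y - 1"
      then show ?thesis using col_next[OF pr(1)[of y] pr(2)[of y] ok k3 bb] nxt[of x y] by (simp add: e e' cce)
    qed
  next
    fix e v assume "e \<in> {{c x, c (x+1)} | x. True}" "v \<in> e"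
    then obtain x where e: "e = {c x, c (x+1)}" and v: "v = c x \<or> v = c (x+1)" by auto
    define p where "p = (x - t) mod k"
    have p0: "0 \<le> p" "p < k" using pr p_def by auto
    show "cc e \<noteq> (if v = c t then \<beta> else if v = c (t+1) then 1 - \<beta> else 2)"
      using v
    proof
      assume v: "v = c x"
      have m: "(if v = c t then \<beta> else if v = c (t+1) then 1 - \<beta> else 2) = (if p = 0 then \<beta> else if p = 1 then 1 - \<beta> else 2)"
        by (simp only: v mi p_def)
      have b: "\<beta> \<noteq> 1 - \<beta>" "\<beta> \<noteq> 2" "1 - \<beta> \<noteq> 2" using bb by arith+
      show ?thesis unfolding m using b by (simp add: e cce p_def[symmetric] col_def)
    next
      assume v: "v = c (x+1)"
      have q: "(x + 1 - t) mod k = (p + 1) mod k" using nxt[of "x+1" x] p_def by simp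
      have m: "(if v = c t then \<beta> else if v = c (t+1) then 1 - \<beta> else 2) = (if (p+1) mod k = 0 then \<beta> else if (p+1) mod k = 1 then 1 - \<beta> else 2)"
        by (simp only: v mi q)
      have b: "\<beta> \<noteq> 1 - \<beta>" "\<beta> \<noteq> 2" "1 - \<beta> \<noteq> 2" using bb by arith+
      show ?thesis
      proof (cases "p + 1 = k")
        case True
        then have "even p" "p \<noteq> 0" using ok k3 by auto
        then show ?thesis unfolding m using True b by (simp add: e cce p_def[symmetric] col_def)
      next
        case False
        then have pp: "(p+1) mod k = p + 1" using p0 by auto
        show ?thesis unfolding m pp using b p0 by (simp add: e cce p_def[symmetric] col_def)
      qed
    qed
  qed
qed

lemma colour_combine:
  assumes E: "E = C \<union> M" and c3: "\<forall>e\<in>C. c e < (3::nat)"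
    and cp: "\<forall>e\<in>C. \<forall>e'\<in>C. e \<noteq> e' \<and> e \<inter> e' \<noteq> {} \<longrightarrow> c e \<noteq> c e'"
    and cm: "\<forall>e\<in>C. \<forall>v\<in>e. c e \<noteq> mi v"
    and m3: "\<forall>e\<in>M. \<forall>v\<in>e. mi v < 3"
    and meq: "\<forall>e\<in>M. \<forall>u\<in>e. \<forall>v\<in>e. mi u = mi v"
    and mdisj: "\<forall>e\<in>M. \<forall>e'\<in>M. e \<noteq> e' \<longrightarrow> e \<inter> e' = {}"
    and mne: "\<forall>e\<in>M. e \<noteq> {}"
  shows "three_edge_colourable E"
proof -
  define c' where "c' e = (if e \<in> M then mi (SOME v. v \<in> e) else c e)" for e
  have cM: "c' e = mi v" if eM: "e \<in> M" and ve: "v \<in> e" for e v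
  proof -
    have "e \<noteq> {}" using mne eM by blast
    then have "(SOME v. v \<in> e) \<in> e" by (simp add: some_in_eq)
    then have "mi (SOME v. v \<in> e) = mi v" using meq eM ve by blast
    then show ?thesis using eM by (simp add: c'_def)
  qed
  have cC: "c' e = c e" if "e \<notin> M" for e using that by (simp add: c'_def)
  show ?thesis unfolding three_edge_colourable_def
  proof (intro exI[of _ c'] conjI ballI impI)
    fix e assume eE: "e \<in> E"
    show "c' e < 3"
    proof (cases "e \<in> M")
      case True
      then obtain v where v: "v \<in> e" using mne by blast
      have "mi v < 3" using m3 True v by blast
      then show ?thesis using cM[OF True v] by simp
    next
      case False
      then have "e \<in> C" using eE E by blast
      then show ?thesis using c3 cC[OF False] by simp
    qed
  next
    fix e e' assume ee: "e \<in> E" "e' \<in> E" and ne: "e \<noteq> e' \<and> e \<inter> e' \<noteq> {}"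
    then obtain v where v: "v \<in> e" "v \<in> e'" by blast
    show "c' e \<noteq> c' e'"
    proof (cases "e \<in> M")
      case True
      show ?thesis
      proof (cases "e' \<in> M")
        case True
        then have "e \<inter> e' = {}" using \<open>e \<in> M\<close> mdisj ne by blast
        then show ?thesis using ne by blast
      next
        case False
        then have "e' \<in> C" using ee E by blast
        then have "c e' \<noteq> mi v" using cm v by blast
        then show ?thesis using cM[OF True v(1)] cC[OF False] by simp
      qed
    next
      case False
      then have eC: "e \<in> C" using ee E by blast
      show ?thesis
      proof (cases "e' \<in> M")
        case True
        have "c e \<noteq> mi v" using cm v eC by blast
        then show ?thesis using cM[OF True v(2)] cC[OF False] by simp
      next
        case F2: False
        then have "e' \<in> C" using ee E by blast
        then have "c e \<noteq> c e'" using cp eC ne by blast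
        then show ?thesis using cC[OF False] cC[OF F2] by simp
      qed
    qed
  qed
qed

locale pg =
  fixes V :: "'a set" and E :: "'a set set" and k :: int and a b :: "int \<Rightarrow> 'a" and s :: "int \<Rightarrow> int"
  assumes k3: "3 \<le> k" and kodd: "odd k"
    and a_eq: "\<And>x y. a x = a y \<longleftrightarrow> x mod k = y mod k"
    and b_eq: "\<And>x y. b x = b y \<longleftrightarrow> x mod k = y mod k"
    and ab: "\<And>x y. a x \<noteq> b y"
    and V_def: "V = range a \<union> range b"
    and s_eq: "\<And>x y. s x mod k = s y mod k \<longleftrightarrow> x mod k = y mod k"
    and s_surj: "\<And>y. \<exists>x. s x mod k = y mod k"
    and E_def: "E = {{a x, a (x+1)} | x. True} \<union> {{b x, b (x+1)} | x. True} \<union> {{a x, b (s x)} | x. True}"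
begin

lemma bs_eq: "b (s x) = b (s y) \<longleftrightarrow> x mod k = y mod k"
  using b_eq s_eq by simp

lemma colour4:
  assumes "b (s (i+1)) = b (s i + 1) \<or> b (s i) = b (s (i+1) + 1)"
  shows "three_edge_colourable E"
proof -
  define EA where "EA = {{a x, a (x+1)} | x. True}"
  define EB where "EB = {{b x, b (x+1)} | x. True}"
  define EM where "EM = {{a x, b (s x)} | x. True}"
  define miA where "miA v = (if v = a i then (0::nat) else if v = a (i+1) then 1 - 0 else 2)" for v
  have "\<exists>ccA. (\<forall>e\<in>EA. ccA e < (3::nat)) \<and>
    (\<forall>e\<in>EA. \<forall>e'\<in>EA. e \<noteq> e' \<and> e \<inter> e' \<noteq> {} \<longrightarrow> ccA e \<noteq> ccA e') \<and>
    (\<forall>e\<in>EA. \<forall>v\<in>e. ccA e \<noteq> miA v)"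
    unfolding EA_def miA_def by (rule cyc_colour[OF k3 kodd a_eq, of 0 i]) simp
  then obtain ccA where A1: "\<forall>e\<in>EA. ccA e < (3::nat)"
    and A2: "\<forall>e\<in>EA. \<forall>e'\<in>EA. e \<noteq> e' \<and> e \<inter> e' \<noteq> {} \<longrightarrow> ccA e \<noteq> ccA e'"
    and A3: "\<forall>e\<in>EA. \<forall>v\<in>e. ccA e \<noteq> miA v" by (elim exE conjE)
  have ii: "\<not> i mod k = (i+1) mod k"
  proof
    assume "i mod k = (i+1) mod k"
    then have "k dvd 1" by (simp add: mod_eq_dvd)
    then show False using k3 by auto
  qed
  obtain t \<beta> where tb: "\<beta> \<le> (1::nat)" and
     bt: "b (s i) = b t \<and> b (s (i+1)) = b (t+1) \<and> \<beta> = 0 \<or> b (s (i+1)) = b t \<and> b (s i) = b (t+1) \<and> \<beta> = 1"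
  proof -
    from assms show ?thesis
    proof
      assume h: "b (s (i+1)) = b (s i + 1)"
      show ?thesis by (rule that[of 0 "s i"]) (use h in simp_all)
    next
      assume h: "b (s i) = b (s (i+1) + 1)"
      show ?thesis by (rule that[of 1 "s (i+1)"]) (use h in simp_all)
    qed
  qed
  define miB where "miB v = (if v = b t then \<beta> else if v = b (t+1) then 1 - \<beta> else 2)" for v
  have "\<exists>ccB. (\<forall>e\<in>EB. ccB e < (3::nat)) \<and>
    (\<forall>e\<in>EB. \<forall>e'\<in>EB. e \<noteq> e' \<and> e \<inter> e' \<noteq> {} \<longrightarrow> ccB e \<noteq> ccB e') \<and>
    (\<forall>e\<in>EB. \<forall>v\<in>e. ccB e \<noteq> miB v)"
    unfolding EB_def miB_def by (rule cyc_colour[OF k3 kodd b_eq tb])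
  then obtain ccB where B1: "\<forall>e\<in>EB. ccB e < (3::nat)"
    and B2: "\<forall>e\<in>EB. \<forall>e'\<in>EB. e \<noteq> e' \<and> e \<inter> e' \<noteq> {} \<longrightarrow> ccB e \<noteq> ccB e'"
    and B3: "\<forall>e\<in>EB. \<forall>v\<in>e. ccB e \<noteq> miB v" by (elim exE conjE)
  define mi where "mi v = (if v \<in> range a then miA v else miB v)" for v
  define c where "c e = (if e \<in> EA then ccA e else ccB e)" for e
  have EAa: "v \<in> range a" if "e \<in> EA" "v \<in> e" for e v using that by (auto simp: EA_def)
  have EBb: "v \<notin> range a" if "e \<in> EB" "v \<in> e" for e v using that ab by (auto simp: EB_def)
  show ?thesis
  proof (rule colour_combine[of E "EA \<union> EB" EM c mi])
    show "E = EA \<union> EB \<union> EM" by (simp add: E_def EA_def EB_def EM_def)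
    show "\<forall>e\<in>EA \<union> EB. c e < 3" using A1 B1 by (auto simp: c_def)
    show "\<forall>e\<in>EA \<union> EB. \<forall>e'\<in>EA \<union> EB. e \<noteq> e' \<and> e \<inter> e' \<noteq> {} \<longrightarrow> c e \<noteq> c e'"
    proof (intro ballI impI)
      fix e e' assume e: "e \<in> EA \<union> EB" and e': "e' \<in> EA \<union> EB" and ne: "e \<noteq> e' \<and> e \<inter> e' \<noteq> {}"
      then obtain v where v: "v \<in> e" "v \<in> e'" by auto
      show "c e \<noteq> c e'"
      proof (cases "e \<in> EA")
        case True
        then have "v \<in> range a" using EAa v by blast
        then have "e' \<in> EA" using e' EBb v by blast
        then show ?thesis using A2 True ne by (simp add: c_def)
      next
        case False
        then have "e \<in> EB" using e by simp
        then have "v \<notin> range a" using EBb v by blast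
        then have "e' \<notin> EA" using EAa v by blast
        then have "e' \<in> EB" using e' by simp
        then show ?thesis using B2 \<open>e \<in> EB\<close> False \<open>e' \<notin> EA\<close> ne by (simp add: c_def)
      qed
    qed
    show "\<forall>e\<in>EA \<union> EB. \<forall>v\<in>e. c e \<noteq> mi v"
    proof (intro ballI)
      fix e v assume e: "e \<in> EA \<union> EB" and v: "v \<in> e"
      show "c e \<noteq> mi v"
      proof (cases "e \<in> EA")
        case True
        then show ?thesis using A3 v EAa[OF True v] by (simp add: c_def mi_def)
      next
        case False
        then have "e \<in> EB" using e by simp
        then show ?thesis using B3 v EBb[OF \<open>e \<in> EB\<close> v] False by (simp add: c_def mi_def)
      qed
    qed
    have h13: "1 - \<beta> < (3::nat)" by arith
    have "miA v < 3" for v by (simp add: miA_def)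
    moreover have "miB v < 3" for v using tb h13 by (simp add: miB_def)
    ultimately have "mi v < 3" for v by (simp add: mi_def)
    then show "\<forall>e\<in>EM. \<forall>v\<in>e. mi v < 3" by blast
    show "\<forall>e\<in>EM. \<forall>u\<in>e. \<forall>v\<in>e. mi u = mi v"
    proof -
      have key: "miA (a x) = miB (b (s x))" for x
      proof -
        consider "x mod k = i mod k" | "x mod k = (i+1) mod k" | "x mod k \<noteq> i mod k" "x mod k \<noteq> (i+1) mod k" by blast
        then show ?thesis
        proof cases
          case 1
          then have "a x = a i" "b (s x) = b (s i)" using a_eq bs_eq by auto
          moreover have "b (s i) \<noteq> b (s (i+1))" using bs_eq ii by simp
          ultimately show ?thesis using bt by (auto simp: miA_def miB_def)
        next
          case 2
          then have "a x = a (i+1)" "b (s x) = b (s (i+1))" using a_eq bs_eq by auto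
          moreover have "b (s i) \<noteq> b (s (i+1))" "a i \<noteq> a (i+1)" using bs_eq a_eq ii by simp_all
          ultimately show ?thesis using bt by (auto simp: miA_def miB_def)
        next
          case 3
          then have "a x \<noteq> a i" "a x \<noteq> a (i+1)" "b (s x) \<noteq> b (s i)" "b (s x) \<noteq> b (s (i+1))"
            using a_eq bs_eq by simp_all
          then show ?thesis using bt by (auto simp: miA_def miB_def)
        qed
      qed
      show ?thesis
      proof (intro ballI)
        fix e u v assume "e \<in> EM" "u \<in> e" "v \<in> e"
        then obtain x where "e = {a x, b (s x)}" by (auto simp: EM_def)
        moreover have "mi (a x) = miA (a x)" by (simp add: mi_def)
        moreover have "b (s x) \<notin> range a" by (metis ab rangeE)
        then have "mi (b (s x)) = miB (b (s x))" by (simp add: mi_def)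
        ultimately show "mi u = mi v" using \<open>u \<in> e\<close> \<open>v \<in> e\<close> key[of x] by auto
      qed
    qed
    show "\<forall>e\<in>EM. \<forall>e'\<in>EM. e \<noteq> e' \<longrightarrow> e \<inter> e' = {}"
    proof (intro ballI impI)
      fix e e' assume "e \<in> EM" "e' \<in> EM" "e \<noteq> e'"
      then obtain x y where e: "e = {a x, b (s x)}" and e': "e' = {a y, b (s y)}" by (auto simp: EM_def)
      have "\<not> x mod k = y mod k"
      proof
        assume "x mod k = y mod k"
        then have "a x = a y" "b (s x) = b (s y)" using a_eq bs_eq by auto
        then show False using \<open>e \<noteq> e'\<close> e e' by simp
      qed
      then have "a x \<noteq> a y" "b (s x) \<noteq> b (s y)" "a x \<noteq> b (s y)" "b (s x) \<noteq> a y"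
        using a_eq bs_eq ab by (simp_all add: ab[symmetric])
      then show "e \<inter> e' = {}" using e e' by auto
    qed
    show "\<forall>e\<in>EM. e \<noteq> {}" by (auto simp: EM_def)
  qed
qed

end

lemma dvd_small: "(k::int) dvd d \<Longrightarrow> \<bar>d\<bar> < k \<Longrightarrow> d = 0"
proof (rule ccontr)
  assume "k dvd d" "\<bar>d\<bar> < k" "d \<noteq> 0"
  then have "\<bar>k\<bar> \<le> \<bar>d\<bar>" using dvd_imp_le_int by blast
  then show False using \<open>\<bar>d\<bar> < k\<close> by simp
qed

context pg begin

lemma a_dvd: "a x = a y \<longleftrightarrow> k dvd x - y" using a_eq mod_eq_dvd by simp
lemma b_dvd: "b x = b y \<longleftrightarrow> k dvd x - y" using b_eq mod_eq_dvd by simp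
lemma s_dvd: "k dvd s x - s y \<longleftrightarrow> k dvd x - y" using s_eq mod_eq_dvd by simp

lemma EA_in: "{a x, a (x+1)} \<in> E" unfolding E_def by blast
lemma EB_in: "{b x, b (x+1)} \<in> E" unfolding E_def by blast
lemma EM_in: "{a x, b (s x)} \<in> E" unfolding E_def by blast

lemma mk_cycle:
  fixes G :: "'a set set" and r i p q \<delta> :: int
  assumes sub: "E - {{a r, b (s r)}} \<subseteq> G"
    and p: "1 \<le> p" "p < k" and q: "0 \<le> q" "q < k" and \<delta>: "\<delta> = 1 \<or> \<delta> = -1"
    and cl: "b (s (i+p) + \<delta>*q) = b (s i)"
    and ir1: "\<not> k dvd i - r" and ir2: "\<not> k dvd (i+p) - r"
  shows "has_cycle V G (nat (p+q+2))"
proof -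
  define m where "m = nat (p+q+2)"
  define g where "g l = (if int l \<le> p then a (i + int l) else b (s (i+p) + \<delta> * (int l - p - 1)))" for l
  have m3: "3 \<le> m" using p q by (simp add: m_def)
  have inE: "e \<in> G" if "e \<in> E" "e \<noteq> {a r, b (s r)}" for e using that sub by blast
  have inj: "inj_on g {0..<m}"
  proof (rule inj_onI)
    fix l l' assume l: "l \<in> {0..<m}" and l': "l' \<in> {0..<m}" and eq: "g l = g l'"
    show "l = l'"
    proof (cases "int l \<le> p")
      case True
      show ?thesis
      proof (cases "int l' \<le> p")
        case True
        then have "a (i + int l) = a (i + int l')" using eq \<open>int l \<le> p\<close> by (simp add: g_def)
        then have "k dvd int l - int l'" using a_dvd by simp
        moreover have "\<bar>int l - int l'\<bar> < k" using True \<open>int l \<le> p\<close> p by simp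
        ultimately show ?thesis using dvd_small by (metis diff_0_right eq_iff_diff_eq_0 of_nat_eq_iff)
      next
        case False
        then show ?thesis using eq \<open>int l \<le> p\<close> ab by (simp add: g_def)
      qed
    next
      case False
      show ?thesis
      proof (cases "int l' \<le> p")
        case True
        then show ?thesis using eq False ab by (simp add: g_def ab[symmetric])
      next
        case F2: False
        then have "b (s (i+p) + \<delta> * (int l - p - 1)) = b (s (i+p) + \<delta> * (int l' - p - 1))"
          using eq False by (simp add: g_def)
        then have "k dvd \<delta> * (int l - p - 1) - \<delta> * (int l' - p - 1)" using b_dvd by simp
        then have "k dvd \<delta> * (int l - int l')" by (simp add: algebra_simps)
        then have "k dvd int l - int l'" using \<delta> by (auto simp: dvd_diff_commute)
        moreover have "\<bar>int l - int l'\<bar> < k" using False F2 l l' q by (auto simp: m_def)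
        ultimately show ?thesis using dvd_small by (metis diff_0_right eq_iff_diff_eq_0 of_nat_eq_iff)
      qed
    qed
  qed
  have img: "g ` {0..<m} \<subseteq> V" by (auto simp: g_def V_def)
  have edges: "{g l, g ((l + 1) mod m)} \<in> G" if l: "l < m" for l
  proof -
    consider "int l < p" | "int l = p" | "p < int l" "l + 1 < m" | "l + 1 = m" using l by linarith
    then show ?thesis
    proof cases
      case 1
      then have "(l+1) mod m = l + 1" using l p q by (simp add: m_def)
      then have "{g l, g ((l + 1) mod m)} = {a (i + int l), a (i + int l + 1)}"
        using 1 by (simp add: g_def algebra_simps)
      moreover have "{a (i + int l), a (i + int l + 1)} \<in> E" by (rule EA_in)
      moreover have "{a (i + int l), a (i + int l + 1)} \<noteq> {a r, b (s r)}"
        using ab by (auto simp: doubleton_eq_iff ab[symmetric])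
      ultimately show ?thesis using inE by simp
    next
      case 2
      then have "(l+1) mod m = l + 1" using l p q by (simp add: m_def)
      then have "{g l, g ((l + 1) mod m)} = {a (i + p), b (s (i+p))}"
        using 2 by (simp add: g_def)
      moreover have "{a (i + p), b (s (i+p))} \<in> E" by (rule EM_in)
      moreover have "{a (i + p), b (s (i+p))} \<noteq> {a r, b (s r)}"
        using ab ir2 a_dvd by (auto simp: doubleton_eq_iff ab[symmetric])
      ultimately show ?thesis using inE by simp
    next
      case 3
      define y where "y = s (i+p) + \<delta> * (int l - p - 1)"
      have gl: "g l = b y" using 3 by (simp add: g_def y_def)
      have g1: "g ((l+1) mod m) = b (y + \<delta>)" using 3 by (simp add: g_def y_def algebra_simps)
      have "{b y, b (y + \<delta>)} \<in> E"
      proof (cases "\<delta> = 1")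
        case True then show ?thesis using EB_in by simp
      next
        case False
        then have "\<delta> = -1" using \<delta> by simp
        then have "{b y, b (y + \<delta>)} = {b (y - 1), b ((y - 1) + 1)}" by auto
        then show ?thesis using EB_in[of "y - 1"] by simp
      qed
      moreover have "{b y, b (y + \<delta>)} \<noteq> {a r, b (s r)}"
        using ab by (auto simp: doubleton_eq_iff ab[symmetric])
      ultimately show ?thesis using inE gl g1 by simp
    next
      case 4
      then have "(l+1) mod m = 0" by simp
      moreover have "int l - p - 1 = q" using 4 p q by (simp add: m_def)
      moreover have "\<not> int l \<le> p" using 4 p q by (simp add: m_def)
      ultimately have "{g l, g ((l + 1) mod m)} = {b (s i), a i}"
        using cl p by (simp add: g_def)
      moreover have "{b (s i), a i} \<in> E" using EM_in by (simp add: insert_commute)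
      moreover have "{b (s i), a i} \<noteq> {a r, b (s r)}"
        using ab ir1 a_dvd by (auto simp: doubleton_eq_iff ab[symmetric])
      ultimately show ?thesis using inE by simp
    qed
  qed
  show ?thesis unfolding has_cycle_def m_def[symmetric]
  proof (intro conjI exI[of _ g] allI impI)
    show "3 \<le> m" by (rule m3)
    show "inj_on g {0..<m}" by (rule inj)
    show "g ` {0..<m} \<subseteq> V" by (rule img)
    fix l assume "l < m" then show "{g l, g ((l + 1) mod m)} \<in> G" by (rule edges)
  qed
qed

end

lemma three_lemma: "\<not> (3::int) dvd x \<Longrightarrow> \<not> 3 dvd x - 1 \<Longrightarrow> \<not> 3 dvd y - 1 \<Longrightarrow> y = - x \<Longrightarrow> False"
  by presburger

lemma not_dvd_small: "0 < (x::int) \<Longrightarrow> x < k \<Longrightarrow> \<not> k dvd x"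
  using zdvd_not_zless by blast

context pg begin

lemma mod_dvd_self: "k dvd x - x mod k"
  by (simp add: mod_eq_dvd)

lemma Dlemma:
  fixes G :: "'a set set" and r i :: int
  assumes sub: "E - {{a r, b (s r)}} \<subseteq> G"
    and og: "\<And>m. odd m \<Longrightarrow> has_cycle V G m \<Longrightarrow> nat k \<le> m"
    and ir1: "\<not> k dvd i - r" and ir2: "\<not> k dvd (i+1) - r"
    and n1: "\<not> k dvd s (i+1) - s i - 1" and n2: "\<not> k dvd s i - s (i+1) - 1"
  shows "k dvd s (i+1) - s i - 3 \<or> k dvd s (i+1) - s i + 3"
proof -
  define d where "d = (s (i+1) - s i) mod k"
  have d0: "0 \<le> d" "d < k" using k3 by (simp_all add: d_def)
  have kd: "k dvd (s (i+1) - s i) - d" unfolding d_def by (rule mod_dvd_self)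
  have dn0: "d \<noteq> 0"
  proof
    assume "d = 0"
    then have "k dvd s (i+1) - s i" using kd by simp
    then have "k dvd (i+1) - i" using s_dvd by blast
    then show False using k3 not_dvd_small[of 1 k] by simp
  qed
  have dn1: "d \<noteq> 1" using kd n1 by auto
  have dnk: "d \<noteq> k - 1"
  proof
    assume "d = k - 1"
    then have "k dvd (s (i+1) - s i - (k - 1))" using kd by simp
    then have "k dvd - (s (i+1) - s i - (k - 1))" by (simp only: dvd_minus_iff)
    then have "k dvd - (s (i+1) - s i - (k - 1)) - k" by (rule dvd_diff) simp
    moreover have "- (s (i+1) - s i - (k - 1)) - k = s i - s (i+1) - 1" by simp
    ultimately show False using n2 by simp
  qed
  have c1: "has_cycle V G (nat (1 + d + 2))"
  proof (rule mk_cycle[OF sub, of 1 d "-1" i])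
    show "b (s (i + 1) + - 1 * d) = b (s i)" using kd by (simp add: b_dvd algebra_simps)
    show "1 \<le> (1::int)" by simp
    show "1 < k" using k3 by simp
    show "0 \<le> d" "d < k" using d0 by simp_all
    show "(-1::int) = 1 \<or> (-1::int) = -1" by simp
    show "\<not> k dvd i - r" by (rule ir1)
    show "\<not> k dvd (i+1) - r" by (rule ir2)
  qed
  have c2: "has_cycle V G (nat (1 + (k - d) + 2))"
  proof (rule mk_cycle[OF sub, of 1 "k - d" 1 i])
    have "k dvd (s (i+1) - s i - d) + k" using kd by simp
    then show "b (s (i + 1) + 1 * (k - d)) = b (s i)" by (simp add: b_dvd algebra_simps)
    show "1 \<le> (1::int)" by simp
    show "1 < k" using k3 by simp
    show "0 \<le> k - d" "k - d < k" using d0 dn0 by simp_all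
    show "(1::int) = 1 \<or> (1::int) = -1" by simp
    show "\<not> k dvd i - r" by (rule ir1)
    show "\<not> k dvd (i+1) - r" by (rule ir2)
  qed
  show ?thesis
  proof (cases "even d")
    case True
    then have "odd (nat (1 + d + 2))" using d0 by (simp add: even_nat_iff)
    then have "nat k \<le> nat (1 + d + 2)" using og c1 by blast
    then have "k \<le> d + 3" using d0 k3 by (simp add: nat_le_eq_zle)
    moreover have "odd (k - d)" using True kodd by simp
    ultimately have "k - d = 1 \<or> k - d = 3" using d0 by presburger
    then have "d = k - 3" using dnk by auto
    then have eq: "(s (i+1) - s i + 3) - k = (s (i+1) - s i) - d" by simp
    have "k dvd (s (i+1) - s i + 3) - k" unfolding eq by (rule kd)
    then have "k dvd ((s (i+1) - s i + 3) - k) + k" by (rule dvd_add) simp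
    then have "k dvd s (i+1) - s i + 3" by simp
    then show ?thesis by simp
  next
    case False
    then have "odd (nat (1 + (k - d) + 2))" using d0 kodd by (simp add: even_nat_iff)
    then have "nat k \<le> nat (1 + (k - d) + 2)" using og c2 by blast
    then have "k \<le> 1 + (k - d) + 2" using d0 k3 by (simp add: nat_le_eq_zle)
    then have "d \<le> 3" by simp
    then have "d = 3" using dn0 dn1 False d0 by presburger
    then show ?thesis using kd by simp
  qed
qed

lemma big:
  fixes G :: "'a set set" and r :: int
  assumes sub: "E - {{a r, b (s r)}} \<subseteq> G"
    and og: "\<And>m. odd m \<Longrightarrow> has_cycle V G m \<Longrightarrow> nat k \<le> m"
    and k7: "7 \<le> k"
    and no4: "\<And>i. \<not> k dvd s (i+1) - s i - 1 \<and> \<not> k dvd s i - s (i+1) - 1"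
  shows False
proof -
  have nd: "\<not> k dvd x" if "0 < x" "x \<le> 3" for x using not_dvd_small[of x k] that k7 by simp
  have D1: "k dvd s (r+2) - s (r+1) - 3 \<or> k dvd s (r+2) - s (r+1) + 3"
    using Dlemma[OF sub og, of "r+1"] no4[of "r+1"] nd[of 1] nd[of 2] by (simp add: add.assoc)
  have D2: "k dvd s (r+3) - s (r+2) - 3 \<or> k dvd s (r+3) - s (r+2) + 3"
    using Dlemma[OF sub og, of "r+2"] no4[of "r+2"] nd[of 2] nd[of 3] by (simp add: add.assoc)
  have nsame: "\<not> k dvd s (r+3) - s (r+1)"
  proof
    assume "k dvd s (r+3) - s (r+1)"
    then have "k dvd (r+3) - (r+1)" using s_dvd by blast
    then show False using nd[of 2] by simp
  qed
  have cyc: False if cl: "k dvd s (r+3) - s (r+1) - 6 * \<delta>" and \<delta>: "\<delta> = 1 \<or> \<delta> = -1" for \<delta>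
  proof -
    have "has_cycle V G (nat (2 + (k - 6) + 2))"
    proof (rule mk_cycle[OF sub, of 2 "k - 6" \<delta> "r+1"])
      have "k dvd (s (r+3) - s (r+1) - 6 * \<delta>) + \<delta> * k" using cl by simp
      then show "b (s (r + 1 + 2) + \<delta> * (k - 6)) = b (s (r + 1))"
        by (simp add: b_dvd algebra_simps)
      show "1 \<le> (2::int)" by simp
      show "2 < k" using k7 by simp
      show "0 \<le> k - 6" "k - 6 < k" using k7 by simp_all
      show "\<delta> = 1 \<or> \<delta> = -1" by (rule \<delta>)
      show "\<not> k dvd (r+1) - r" using nd[of 1] by simp
      show "\<not> k dvd (r+1+2) - r" using nd[of 3] by simp
    qed
    moreover have "odd (nat (2 + (k - 6) + 2))" using kodd k7 by (simp add: even_nat_iff)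
    ultimately have "nat k \<le> nat (2 + (k - 6) + 2)" using og by blast
    then show False using k7 by simp
  qed
  show False
  proof -
    have e: "s (r+3) - s (r+1) = (s (r+3) - s (r+2)) + (s (r+2) - s (r+1))" by simp
    from D1 D2 show False
    proof (elim disjE)
      assume h1: "k dvd s (r+2) - s (r+1) - 3" and h2: "k dvd s (r+3) - s (r+2) - 3"
      have "k dvd (s (r+3) - s (r+2) - 3) + (s (r+2) - s (r+1) - 3)" by (rule dvd_add[OF h2 h1])
      moreover have "(s (r+3) - s (r+2) - 3) + (s (r+2) - s (r+1) - 3) = s (r+3) - s (r+1) - 6 * (1)" by simp
      ultimately show False using cyc[of 1] by simp
    next
      assume h1: "k dvd s (r+2) - s (r+1) - 3" and h2: "k dvd s (r+3) - s (r+2) + 3"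
      have "k dvd (s (r+3) - s (r+2) + 3) + (s (r+2) - s (r+1) - 3)" by (rule dvd_add[OF h2 h1])
      then show False using nsame by (simp add: algebra_simps)
    next
      assume h1: "k dvd s (r+2) - s (r+1) + 3" and h2: "k dvd s (r+3) - s (r+2) - 3"
      have "k dvd (s (r+3) - s (r+2) - 3) + (s (r+2) - s (r+1) + 3)" by (rule dvd_add[OF h2 h1])
      then show False using nsame by (simp add: algebra_simps)
    next
      assume h1: "k dvd s (r+2) - s (r+1) + 3" and h2: "k dvd s (r+3) - s (r+2) + 3"
      have "k dvd (s (r+3) - s (r+2) + 3) + (s (r+2) - s (r+1) + 3)" by (rule dvd_add[OF h2 h1])
      moreover have "(s (r+3) - s (r+2) + 3) + (s (r+2) - s (r+1) + 3) = s (r+3) - s (r+1) - 6 * (- 1)" by simp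
      ultimately show False using cyc[of "-1"] by simp
    qed
  qed
qed

lemma k3case:
  assumes "k = 3" and no4: "\<And>i. \<not> k dvd s (i+1) - s i - 1 \<and> \<not> k dvd s i - s (i+1) - 1"
  shows False
proof -
  have "\<not> k dvd s 1 - s 0"
  proof
    assume "k dvd s 1 - s 0"
    then have "k dvd 1 - 0" using s_dvd by blast
    then show False using assms(1) by simp
  qed
  then have f1: "\<not> 3 dvd s 1 - s 0" using assms(1) by simp
  have h: "\<not> k dvd s (0+1) - s 0 - 1 \<and> \<not> k dvd s 0 - s (0+1) - 1" by (rule no4)
  then have f2: "\<not> 3 dvd s 1 - s 0 - 1" and f3: "\<not> 3 dvd s 0 - s 1 - 1" using assms(1) by simp_all
  show False by (rule three_lemma[OF f1 f2 f3]) simp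
qed

lemma k5struct:
  assumes "k = 5" and no4: "\<And>i. \<not> k dvd s (i+1) - s i - 1 \<and> \<not> k dvd s i - s (i+1) - 1"
  shows "\<exists>d. (d = 2 \<or> d = 3) \<and> (\<forall>n::nat. k dvd s (int n) - s 0 - d * int n)"
proof -
  define D where "D x = (s (x+1) - s x) mod 5" for x
  have Dv: "D x = 2 \<or> D x = 3" for x
  proof -
    have "\<not> k dvd s (x+1) - s x"
    proof
      assume "k dvd s (x+1) - s x"
      then have "k dvd (x+1) - x" using s_dvd by blast
      then show False using assms(1) by simp
    qed
    then have h0: "\<not> 5 dvd s (x+1) - s x" using assms(1) by simp
    have h1: "\<not> 5 dvd s (x+1) - s x - 1" "\<not> 5 dvd s x - s (x+1) - 1" using no4[of x] assms(1) by simp_all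
    show ?thesis using h0 h1 unfolding D_def by presburger
  qed
  have Dd: "5 dvd s (x+1) - s x - D x" for x unfolding D_def using mod_dvd_self assms(1) by simp
  have Dc: "D (x+1) = D x" for x
  proof (rule ccontr)
    assume ne: "D (x+1) \<noteq> D x"
    have "\<not> k dvd s (x+2) - s x"
    proof
      assume "k dvd s (x+2) - s x"
      then have "k dvd (x+2) - x" using s_dvd by blast
      then show False using assms(1) by simp
    qed
    then have h0: "\<not> 5 dvd s (x+2) - s x" using assms(1) by simp
    have h1: "5 dvd s (x+2) - s (x+1) - D (x+1)" using Dd[of "x+1"] by (simp add: add.assoc)
    show False using h0 h1 Dd[of x] Dv[of x] Dv[of "x+1"] ne by presburger
  qed
  have DD: "D (int n) = D 0" for n
  proof (induction n)
    case 0 show ?case by simp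
  next
    case (Suc n)
    have "D (int (Suc n)) = D (int n + 1)" by (simp add: add.commute)
    also have "\<dots> = D (int n)" by (rule Dc)
    finally show ?case using Suc by simp
  qed
  have "5 dvd s (int n) - s 0 - D 0 * int n" for n
  proof (induction n)
    case 0 then show ?case by simp
  next
    case (Suc n)
    have "5 dvd (s (int n + 1) - s (int n) - D (int n)) + (s (int n) - s 0 - D 0 * int n)"
      by (rule dvd_add[OF Dd[of "int n"] Suc])
    then show ?case using DD[of n] by (simp add: algebra_simps)
  qed
  then show ?thesis using Dv[of 0] assms(1) by blast
qed

end

lemma less5: "(X::nat) < 5 \<Longrightarrow> X = 0 \<or> X = 1 \<or> X = 2 \<or> X = 3 \<or> X = 4" by arith

lemma five_set: "{f i | i. i < (5::nat)} = {f 0, f 1, f 2, f 3, f 4}"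
proof
  show "{f i | i. i < (5::nat)} \<subseteq> {f 0, f 1, f 2, f 3, f 4}"
  proof
    fix x assume "x \<in> {f i | i. i < (5::nat)}"
    then obtain i where "x = f i" "i < 5" by blast
    then show "x \<in> {f 0, f 1, f 2, f 3, f 4}" using less5[of i] by auto
  qed
  show "{f 0, f 1, f 2, f 3, f 4} \<subseteq> {f i | i. i < (5::nat)}" by fastforce
qed

lemma PE_explicit: "petersen_E = {{0,1},{1,2},{2,3},{3,4},{4,0},{0,5},{1,6},{2,7},{3,8},{4,9},{5,7},{6,8},{7,9},{8,5},{9,6}}"
  unfolding petersen_E_def
  by (simp only: five_set[of "\<lambda>i. {i, (i + 1) mod 5}"] five_set[of "\<lambda>i. {i, i + 5}"]
     five_set[of "\<lambda>i. {i + 5, (i + 2) mod 5 + 5}"]) (simp add: insert_commute numeral_2_eq_2)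

lemma PA: assumes "X < 5" "Y < 5" shows "{X, Y} \<in> petersen_E \<longleftrightarrow> (Y = (X+1) mod 5 \<or> X = (Y+1) mod 5)"
  using less5[OF assms(1)] less5[OF assms(2)] by (elim disjE) (simp_all add: PE_explicit doubleton_eq_iff)

lemma PAB: assumes "X < 5" "Y < 5" shows "{X, Y + 5} \<in> petersen_E \<longleftrightarrow> X = Y"
  using less5[OF assms(1)] less5[OF assms(2)] by (elim disjE) (simp_all add: PE_explicit doubleton_eq_iff)

lemma PB: assumes "X < 5" "Y < 5" shows "{X + 5, Y + 5} \<in> petersen_E \<longleftrightarrow> (Y = (X+2) mod 5 \<or> X = (Y+2) mod 5)"
  using less5[OF assms(1)] less5[OF assms(2)] by (elim disjE) (simp_all add: PE_explicit doubleton_eq_iff)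

context pg begin

lemma E_cases: "e \<in> E \<longleftrightarrow> (\<exists>z. e = {a z, a (z+1)}) \<or> (\<exists>z. e = {b z, b (z+1)}) \<or> (\<exists>z. e = {a z, b (s z)})"
  unfolding E_def by blast

lemma ba: "b x \<noteq> a y" using ab by metis

lemma Eaa: "{a x, a y} \<in> E \<longleftrightarrow> k dvd y - x - 1 \<or> k dvd x - y - 1"
proof
  assume "{a x, a y} \<in> E"
  then consider z where "{a x, a y} = {a z, a (z+1)}" | z where "{a x, a y} = {b z, b (z+1)}"
    | z where "{a x, a y} = {a z, b (s z)}" unfolding E_cases by blast
  then show "k dvd y - x - 1 \<or> k dvd x - y - 1"
  proof cases
    case 1
    then have "(a x = a z \<and> a y = a (z+1)) \<or> (a x = a (z+1) \<and> a y = a z)" by (simp add: doubleton_eq_iff)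
    then have "(k dvd x - z \<and> k dvd y - (z+1)) \<or> (k dvd x - (z+1) \<and> k dvd y - z)" by (simp add: a_dvd)
    then show ?thesis
    proof
      assume h: "k dvd x - z \<and> k dvd y - (z+1)"
      have "k dvd (y - (z+1)) - (x - z)" by (rule dvd_diff) (use h in simp_all)
      moreover have "(y - (z+1)) - (x - z) = y - x - 1" by simp
      ultimately show ?thesis by simp
    next
      assume h: "k dvd x - (z+1) \<and> k dvd y - z"
      have "k dvd (x - (z+1)) - (y - z)" by (rule dvd_diff) (use h in simp_all)
      moreover have "(x - (z+1)) - (y - z) = x - y - 1" by simp
      ultimately show ?thesis by simp
    qed
  next
    case 2
    then have "a x \<in> {b z, b (z+1)}" by blast
    then show ?thesis using ab by auto
  next
    case 3
    then have "b (s z) \<in> {a x, a y}" by blast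
    then show ?thesis using ba by auto
  qed
next
  assume "k dvd y - x - 1 \<or> k dvd x - y - 1"
  then show "{a x, a y} \<in> E"
  proof
    assume "k dvd y - x - 1"
    then have "a y = a (x+1)" by (simp add: a_dvd algebra_simps)
    then show ?thesis using EA_in[of x] by simp
  next
    assume "k dvd x - y - 1"
    then have "a x = a (y+1)" by (simp add: a_dvd algebra_simps)
    then show ?thesis using EA_in[of y] by (simp add: insert_commute)
  qed
qed

lemma Eab: "{a x, b (s y)} \<in> E \<longleftrightarrow> k dvd x - y"
proof
  assume "{a x, b (s y)} \<in> E"
  then consider z where "{a x, b (s y)} = {a z, a (z+1)}" | z where "{a x, b (s y)} = {b z, b (z+1)}"
    | z where "{a x, b (s y)} = {a z, b (s z)}" unfolding E_cases by blast
  then show "k dvd x - y"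
  proof cases
    case 1
    then have "b (s y) \<in> {a z, a (z+1)}" by blast
    then show ?thesis using ba by auto
  next
    case 2
    then have "a x \<in> {b z, b (z+1)}" by blast
    then show ?thesis using ab by auto
  next
    case 3
    then have "a x = a z \<and> b (s y) = b (s z)" using ab ba by (auto simp: doubleton_eq_iff)
    then have "k dvd x - z" "k dvd y - z" by (simp_all add: a_dvd b_dvd s_dvd)
    then have "k dvd (x - z) - (y - z)" by (rule dvd_diff)
    then show ?thesis by simp
  qed
next
  assume "k dvd x - y"
  then have "a x = a y" by (simp add: a_dvd)
  then show "{a x, b (s y)} \<in> E" using EM_in[of y] by simp
qed

lemma Ebb: "{b (s x), b (s y)} \<in> E \<longleftrightarrow> k dvd s y - s x - 1 \<or> k dvd s x - s y - 1"
proof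
  assume "{b (s x), b (s y)} \<in> E"
  then consider z where "{b (s x), b (s y)} = {a z, a (z+1)}" | z where "{b (s x), b (s y)} = {b z, b (z+1)}"
    | z where "{b (s x), b (s y)} = {a z, b (s z)}" unfolding E_cases by blast
  then show "k dvd s y - s x - 1 \<or> k dvd s x - s y - 1"
  proof cases
    case 1
    then have "b (s x) \<in> {a z, a (z+1)}" by blast
    then show ?thesis using ba by auto
  next
    case 2
    then have "(b (s x) = b z \<and> b (s y) = b (z+1)) \<or> (b (s x) = b (z+1) \<and> b (s y) = b z)" by (simp add: doubleton_eq_iff)
    then have "(k dvd s x - z \<and> k dvd s y - (z+1)) \<or> (k dvd s x - (z+1) \<and> k dvd s y - z)" by (simp add: b_dvd)
    then show ?thesis
    proof
      assume h: "k dvd s x - z \<and> k dvd s y - (z+1)"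
      have "k dvd (s y - (z+1)) - (s x - z)" by (rule dvd_diff) (use h in simp_all)
      moreover have "(s y - (z+1)) - (s x - z) = s y - s x - 1" by simp
      ultimately show ?thesis by simp
    next
      assume h: "k dvd s x - (z+1) \<and> k dvd s y - z"
      have "k dvd (s x - (z+1)) - (s y - z)" by (rule dvd_diff) (use h in simp_all)
      moreover have "(s x - (z+1)) - (s y - z) = s x - s y - 1" by simp
      ultimately show ?thesis by simp
    qed
  next
    case 3
    then have "a z \<in> {b (s x), b (s y)}" by blast
    then show ?thesis using ab by auto
  qed
next
  assume "k dvd s y - s x - 1 \<or> k dvd s x - s y - 1"
  then show "{b (s x), b (s y)} \<in> E"
  proof
    assume "k dvd s y - s x - 1"
    then have "b (s y) = b (s x + 1)" by (simp add: b_dvd algebra_simps)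
    then show ?thesis using EB_in[of "s x"] by simp
  next
    assume "k dvd s x - s y - 1"
    then have "b (s x) = b (s y + 1)" by (simp add: b_dvd algebra_simps)
    then show ?thesis using EB_in[of "s y"] by (simp add: insert_commute)
  qed
qed

lemma Vrep:
  assumes "v \<in> V"
  shows "(\<exists>X::nat. int X < k \<and> v = a (int X)) \<or> (\<exists>X::nat. int X < k \<and> v = b (s (int X)))"
proof -
  have k0: "0 < k" using k3 by simp
  from assms consider y where "v = a y" | y where "v = b y" unfolding V_def by blast
  then show ?thesis
  proof cases
    case 1
    have "a y = a (int (nat (y mod k)))" using k0 by (simp add: a_eq)
    moreover have "int (nat (y mod k)) < k" using k0 by simp
    ultimately show ?thesis using 1 by blast
  next
    case 2
    obtain x where "s x mod k = y mod k" using s_surj by blast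
    then have "b y = b (s x)" using b_eq by simp
    also have "\<dots> = b (s (int (nat (x mod k))))" using k0 by (simp add: bs_eq)
    finally have "v = b (s (int (nat (x mod k))))" using 2 by simp
    moreover have "int (nat (x mod k)) < k" using k0 by simp
    ultimately show ?thesis by blast
  qed
qed

end

lemma dv5: "((5::int) dvd D - 1 \<or> 5 dvd - D - 1) \<longleftrightarrow> (D mod 5 = 1 \<or> D mod 5 = 4)"
  by presburger

lemma dv0: "((5::int) dvd D) \<longleftrightarrow> D mod 5 = 0"
  by presburger

lemma arithA: fixes X Y :: nat assumes "X < 5" "Y < 5"
  shows "((5::int) dvd int Y - int X - 1 \<or> 5 dvd int X - int Y - 1) \<longleftrightarrow> (Y = (X+1) mod 5 \<or> X = (Y+1) mod 5)"
proof -
  have "((5::int) dvd int Y - int X - 1 \<or> 5 dvd int X - int Y - 1) \<longleftrightarrow> ((int Y - int X) mod 5 = 1 \<or> (int Y - int X) mod 5 = 4)"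
    using dv5[of "int Y - int X"] by simp
  also have "\<dots> \<longleftrightarrow> (Y = (X+1) mod 5 \<or> X = (Y+1) mod 5)"
    using less5[OF assms(1)] less5[OF assms(2)] by (elim disjE) simp_all
  finally show ?thesis .
qed

lemma arithAB: fixes X Y :: nat assumes "X < 5" "Y < 5"
  shows "(5::int) dvd int X - int Y \<longleftrightarrow> X = Y"
  unfolding dv0 using less5[OF assms(1)] less5[OF assms(2)] by (elim disjE) simp_all

lemma arithB: fixes X Y :: nat and A B C d :: int
  assumes "X < 5" "Y < 5" "d = 2 \<or> d = 3" "5 dvd A - C - d * int X" "5 dvd B - C - d * int Y"
  shows "(5 dvd B - A - 1 \<or> 5 dvd A - B - 1) \<longleftrightarrow> (Y = (X+2) mod 5 \<or> X = (Y+2) mod 5)"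
proof -
  have "5 dvd (B - C - d * int Y) - (A - C - d * int X)" using assms(4,5) by (rule dvd_diff[rotated])
  then have "(B - A) mod 5 = (d * (int Y - int X)) mod 5"
    by (simp add: mod_eq_dvd_iff algebra_simps)
  moreover have "(5 dvd B - A - 1 \<or> 5 dvd A - B - 1) \<longleftrightarrow> ((B - A) mod 5 = 1 \<or> (B - A) mod 5 = 4)"
    using dv5[of "B - A"] by simp
  ultimately have "(5 dvd B - A - 1 \<or> 5 dvd A - B - 1) \<longleftrightarrow> ((d * (int Y - int X)) mod 5 = 1 \<or> (d * (int Y - int X)) mod 5 = 4)"
    by simp
  also have "\<dots> \<longleftrightarrow> (Y = (X+2) mod 5 \<or> X = (Y+2) mod 5)"
    using less5[OF assms(1)] less5[OF assms(2)] assms(3) by (elim disjE) simp_all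
  finally show ?thesis .
qed

context pg begin

lemma k5iso:
  assumes k5: "k = 5" and dS: "d = 2 \<or> d = 3" and sd: "\<forall>n::nat. k dvd s (int n) - s 0 - d * int n"
  shows "\<exists>\<phi>. bij_betw \<phi> V {0..<10} \<and> (\<forall>u\<in>V. \<forall>v\<in>V. {u,v} \<in> E \<longleftrightarrow> {\<phi> u, \<phi> v} \<in> petersen_E)"
proof -
  define \<phi> where "\<phi> v = (if v \<in> range a then nat ((SOME x. v = a x) mod 5) else nat ((SOME x. v = b (s x)) mod 5) + 5)" for v
  have \<phi>a: "\<phi> (a x) = nat (x mod 5)" for x
  proof -
    have "\<exists>y. a x = a y" by blast
    then have "a x = a (SOME y. a x = a y)" by (rule someI_ex)
    then have "x mod 5 = (SOME y. a x = a y) mod 5" using a_eq k5 by simp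
    then show ?thesis by (simp add: \<phi>_def)
  qed
  have \<phi>b: "\<phi> (b (s x)) = nat (x mod 5) + 5" for x
  proof -
    have "\<exists>y. b (s x) = b (s y)" by blast
    then have "b (s x) = b (s (SOME y. b (s x) = b (s y)))" by (rule someI_ex)
    then have "x mod 5 = (SOME y. b (s x) = b (s y)) mod 5" using bs_eq k5 by simp
    moreover have "b (s x) \<notin> range a" using ba by blast
    ultimately show ?thesis by (simp add: \<phi>_def)
  qed
  have \<phi>a': "\<phi> (a (int X)) = X" if "X < 5" for X using that \<phi>a[of "int X"] by simp
  have \<phi>b': "\<phi> (b (s (int X))) = X + 5" if "X < 5" for X using that \<phi>b[of "int X"] by simp
  have rep: "(\<exists>X. X < 5 \<and> v = a (int X)) \<or> (\<exists>X. X < 5 \<and> v = b (s (int X)))" if "v \<in> V" for v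
    using Vrep[OF that] k5 by auto
  have aV: "a x \<in> V" for x by (simp add: V_def)
  have bV: "b x \<in> V" for x by (simp add: V_def)
  have inj: "inj_on \<phi> V"
  proof (rule inj_onI)
    fix u v assume u: "u \<in> V" and v: "v \<in> V" and eq: "\<phi> u = \<phi> v"
    from rep[OF u] rep[OF v] show "u = v"
    proof (elim disjE exE conjE)
      fix X Y assume "X < 5" "u = a (int X)" "Y < 5" "v = a (int Y)"
      then show ?thesis using eq \<phi>a' by simp
    next
      fix X Y assume "X < 5" "u = a (int X)" "Y < 5" "v = b (s (int Y))"
      then show ?thesis using eq \<phi>a' \<phi>b' by simp
    next
      fix X Y assume "X < 5" "u = b (s (int X))" "Y < 5" "v = a (int Y)"
      then show ?thesis using eq \<phi>a' \<phi>b' by simp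
    next
      fix X Y assume "X < 5" "u = b (s (int X))" "Y < 5" "v = b (s (int Y))"
      then show ?thesis using eq \<phi>b' by simp
    qed
  qed
  have img: "\<phi> ` V = {0..<10}"
  proof
    show "\<phi> ` V \<subseteq> {0..<10}"
    proof
      fix n assume "n \<in> \<phi> ` V"
      then obtain v where v: "v \<in> V" "n = \<phi> v" by blast
      from rep[OF v(1)] show "n \<in> {0..<10}" using v(2) \<phi>a' \<phi>b' by auto
    qed
    show "{0..<10} \<subseteq> \<phi> ` V"
    proof
      fix n assume n: "n \<in> {0..<(10::nat)}"
      show "n \<in> \<phi> ` V"
      proof (cases "n < 5")
        case True
        then have "\<phi> (a (int n)) = n" by (rule \<phi>a')
        then show ?thesis using aV by (metis imageI)
      next
        case False
        then have "n - 5 < 5" using n by simp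
        then have "\<phi> (b (s (int (n - 5)))) = n - 5 + 5" by (rule \<phi>b')
        moreover have "n - 5 + 5 = n" using False by simp
        ultimately have "\<phi> (b (s (int (n - 5)))) = n" by (simp only:)
        then show ?thesis using bV by (metis imageI)
      qed
    qed
  qed
  have sdX: "5 dvd s (int X) - s 0 - d * int X" for X using sd k5 by simp
  have edges: "{u,v} \<in> E \<longleftrightarrow> {\<phi> u, \<phi> v} \<in> petersen_E" if u: "u \<in> V" and v: "v \<in> V" for u v
  proof -
    from rep[OF u] rep[OF v] show ?thesis
    proof (elim disjE exE conjE)
      fix X Y assume X: "X < 5" "u = a (int X)" and Y: "Y < 5" "v = a (int Y)"
      then show ?thesis using Eaa[of "int X" "int Y"] PA[OF X(1) Y(1)] arithA[OF X(1) Y(1)] \<phi>a' k5 by simp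
    next
      fix X Y assume X: "X < 5" "u = a (int X)" and Y: "Y < 5" "v = b (s (int Y))"
      then show ?thesis using Eab[of "int X" "int Y"] PAB[OF X(1) Y(1)] arithAB[OF X(1) Y(1)] \<phi>a' \<phi>b' k5 by simp
    next
      fix X Y assume X: "X < 5" "u = b (s (int X))" and Y: "Y < 5" "v = a (int Y)"
      have "{u, v} = {a (int Y), b (s (int X))}" using X Y by (simp add: insert_commute)
      moreover have "{\<phi> u, \<phi> v} = {Y, X + 5}" using X Y \<phi>a' \<phi>b' by (simp add: insert_commute)
      ultimately show ?thesis using Eab[of "int Y" "int X"] PAB[OF Y(1) X(1)] arithAB[OF Y(1) X(1)] k5 by simp
    next
      fix X Y assume X: "X < 5" "u = b (s (int X))" and Y: "Y < 5" "v = b (s (int Y))"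
      then show ?thesis using Ebb[of "int X" "int Y"] PB[OF X(1) Y(1)]
          arithB[OF X(1) Y(1) dS sdX[of X] sdX[of Y]] \<phi>b' k5 by simp
    qed
  qed
  show ?thesis using inj img edges unfolding bij_betw_def by blast
qed

end

lemma iso_minus:
  assumes bij: "bij_betw \<phi> V V'" and ed: "\<forall>u\<in>V. \<forall>v\<in>V. {u,v} \<in> E \<longleftrightarrow> {\<phi> u, \<phi> v} \<in> E'"
    and uv: "u \<in> V" "v \<in> V"
  shows "\<forall>w\<in>V. \<forall>z\<in>V. {w,z} \<in> E - {{u,v}} \<longleftrightarrow> {\<phi> w, \<phi> z} \<in> E' - {{\<phi> u, \<phi> v}}"
proof (intro ballI)
  fix w z assume wz: "w \<in> V" "z \<in> V"
  have inj: "inj_on \<phi> V" using bij by (simp add: bij_betw_def)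
  have "{w,z} = {u,v} \<longleftrightarrow> {\<phi> w, \<phi> z} = {\<phi> u, \<phi> v}"
    using inj wz uv unfolding doubleton_eq_iff inj_on_def by blast
  then show "{w,z} \<in> E - {{u,v}} \<longleftrightarrow> {\<phi> w, \<phi> z} \<in> E' - {{\<phi> u, \<phi> v}}" using ed wz by auto
qed

lemma extract_pg:
  assumes pw: "permutation_graph_wrt V E M"
  obtains n fA fB \<sigma> where "card V = 2*n" "3 \<le> n" "inj_on fA {0..<n}" "inj_on fB {0..<n}"
    "\<forall>j<n. \<forall>l<n. fA j \<noteq> fB l" "V = fA`{0..<n} \<union> fB`{0..<n}" "\<forall>j<n. \<sigma> j < n" "inj_on \<sigma> {0..<n}"
    "E = {{fA j, fA ((j+1) mod n)} | j. j<n} \<union> {{fB j, fB ((j+1) mod n)} | j. j<n} \<union> M"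
    "M = {{fA j, fB (\<sigma> j)} | j. j<n}"
proof -
  from pw have cub: "cubic V E" and pm: "perfect_matching V E M"
    and ex: "\<exists>VA EA VB EB. V = VA \<union> VB \<and> VA \<inter> VB = {} \<and> E - M = EA \<union> EB \<and>
        cycle_graph VA EA (card V div 2) \<and> cycle_graph VB EB (card V div 2) \<and>
        chordless_in E VA EA \<and> chordless_in E VB EB"
    by (simp_all add: permutation_graph_wrt_def)
  define n where "n = card V div 2"
  from ex obtain VA EA VB EB where V: "V = VA \<union> VB" and disj: "VA \<inter> VB = {}" and EM: "E - M = EA \<union> EB"
    and cA: "cycle_graph VA EA n" and cB: "cycle_graph VB EB n"
    and chA: "chordless_in E VA EA" and chB: "chordless_in E VB EB" unfolding n_def by blast
  from cA obtain fA where n3: "3 \<le> n" and bA: "bij_betw fA {0..<n} VA"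
    and EA: "EA = {{fA i, fA ((i + 1) mod n)} | i. i < n}" unfolding cycle_graph_def by blast
  from cB obtain fB where bB: "bij_betw fB {0..<n} VB"
    and EB: "EB = {{fB i, fB ((i + 1) mod n)} | i. i < n}" unfolding cycle_graph_def by blast
  have sg: "simple_graph V E" using cub by (simp add: cubic_def)
  then have finV: "finite V" by (simp add: simple_graph_def)
  have edge: "\<exists>u v. u \<noteq> v \<and> u \<in> V \<and> v \<in> V \<and> e = {u, v}" if "e \<in> E" for e
    using sg that by (simp add: simple_graph_def)
  have MsubE: "M \<subseteq> E" and uniq: "\<forall>v\<in>V. \<exists>!e. e \<in> M \<and> v \<in> e" using pm by (simp_all add: perfect_matching_def)
  have cVA: "card VA = n" using bA by (simp add: bij_betw_same_card[symmetric])
  have cVB: "card VB = n" using bB by (simp add: bij_betw_same_card[symmetric])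
  have "card V = card VA + card VB" using V disj finV by (simp add: card_Un_disjoint)
  then have cV: "card V = 2 * n" using cVA cVB by simp
  have imA: "fA ` {0..<n} = VA" and imB: "fB ` {0..<n} = VB" using bA bB by (simp_all add: bij_betw_def)
  have injA: "inj_on fA {0..<n}" and injB: "inj_on fB {0..<n}" using bA bB by (simp_all add: bij_betw_def)
  have AB: "\<forall>j<n. \<forall>l<n. fA j \<noteq> fB l" using imA imB disj by fastforce
  have notM: "e \<notin> M" if "e \<in> EA \<union> EB" for e using that EM by blast
  have other: "\<exists>w. w \<noteq> u \<and> w \<in> V \<and> e = {u, w}" if h: "e \<in> E" "u \<in> e" for e u
  proof -
    obtain x y where "x \<noteq> y" "x \<in> V" "y \<in> V" "e = {x, y}" using edge[OF h(1)] by blast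
    then show ?thesis using h(2) by (auto simp: insert_commute)
  qed
  have keyA: "\<exists>l<n. {fA j, fB l} \<in> M" if j: "j < n" for j
  proof -
    have "fA j \<in> V" using j imA V by auto
    then obtain e where e: "e \<in> M" "fA j \<in> e" using uniq by blast
    then obtain w where w: "w \<noteq> fA j" "w \<in> V" "e = {fA j, w}" using other MsubE by blast
    have "w \<notin> VA"
    proof
      assume "w \<in> VA"
      moreover have "fA j \<in> VA" using j imA by auto
      ultimately have "e \<subseteq> VA" using w by auto
      then have "e \<in> EA" using chA e MsubE by (auto simp: chordless_in_def)
      then show False using notM e by blast
    qed
    then have "w \<in> VB" using w V by blast
    then obtain l where "l < n" "w = fB l" using imB by auto
    then show ?thesis using e w by blast
  qed
  define \<sigma> where "\<sigma> j = (SOME l. l < n \<and> {fA j, fB l} \<in> M)" for j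
  have \<sigma>: "\<sigma> j < n \<and> {fA j, fB (\<sigma> j)} \<in> M" if "j < n" for j
    unfolding \<sigma>_def using someI_ex[OF keyA[OF that]] by blast
  have uniqM: "e = e'" if "e \<in> M" "e' \<in> M" "v \<in> e" "v \<in> e'" "v \<in> V" for e e' v
    using uniq that by blast
  have inj\<sigma>: "inj_on \<sigma> {0..<n}"
  proof (rule inj_onI)
    fix j j' assume j: "j \<in> {0..<n}" and j': "j' \<in> {0..<n}" and eq: "\<sigma> j = \<sigma> j'"
    have "fB (\<sigma> j) \<in> V" using \<sigma> j imB V by auto
    moreover have m1: "{fA j, fB (\<sigma> j)} \<in> M" using \<sigma> j by simp
    moreover have m2: "{fA j', fB (\<sigma> j')} \<in> M" using \<sigma> j' by simp
    moreover have "fB (\<sigma> j) \<in> {fA j, fB (\<sigma> j)}" "fB (\<sigma> j) \<in> {fA j', fB (\<sigma> j')}" using eq by simp_all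
    ultimately have "{fA j, fB (\<sigma> j)} = {fA j', fB (\<sigma> j')}" using uniqM by blast
    moreover have "fA j \<noteq> fB (\<sigma> j')" using AB \<sigma> j j' by auto
    ultimately have "fA j = fA j'" by (auto simp: doubleton_eq_iff)
    then show "j = j'" using injA j j' by (simp add: inj_on_def)
  qed
  have Mdef: "M = {{fA j, fB (\<sigma> j)} | j. j<n}"
  proof
    show "{{fA j, fB (\<sigma> j)} | j. j<n} \<subseteq> M" using \<sigma> by blast
    show "M \<subseteq> {{fA j, fB (\<sigma> j)} | j. j<n}"
    proof
      fix e assume eM: "e \<in> M"
      obtain x y where xy: "x \<noteq> y" "x \<in> V" "y \<in> V" "e = {x, y}" using edge eM MsubE by blast
      have inA: "e \<in> {{fA j, fB (\<sigma> j)} | j. j<n}" if u: "u \<in> e" "u \<in> VA" for u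
      proof -
        obtain j where j: "j < n" "u = fA j" using u imA by auto
        have "u \<in> V" using u V by auto
        then have "e = {fA j, fB (\<sigma> j)}" using uniqM[OF eM] \<sigma>[OF j(1)] u j by auto
        then show ?thesis using j by blast
      qed
      show "e \<in> {{fA j, fB (\<sigma> j)} | j. j<n}"
      proof (cases "x \<in> VA \<or> y \<in> VA")
        case True
        then show ?thesis using inA xy by auto
      next
        case False
        then have "e \<subseteq> VB" using xy V by auto
        then have "e \<in> EB" using chB eM MsubE by (auto simp: chordless_in_def)
        then show ?thesis using notM eM by blast
      qed
    qed
  qed
  have Edef: "E = EA \<union> EB \<union> M" using EM MsubE by blast
  show ?thesis
  proof (rule that[of n fA fB \<sigma>])
    show "card V = 2 * n" by (rule cV)
    show "3 \<le> n" by (rule n3)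
    show "inj_on fA {0..<n}" "inj_on fB {0..<n}" by (rule injA, rule injB)
    show "\<forall>j<n. \<forall>l<n. fA j \<noteq> fB l" by (rule AB)
    show "V = fA`{0..<n} \<union> fB`{0..<n}" using V imA imB by simp
    show "\<forall>j<n. \<sigma> j < n" using \<sigma> by blast
    show "inj_on \<sigma> {0..<n}" by (rule inj\<sigma>)
    show "E = {{fA j, fA ((j+1) mod n)} | j. j<n} \<union> {{fB j, fB ((j+1) mod n)} | j. j<n} \<union> M"
      using Edef EA EB by simp
    show "M = {{fA j, fB (\<sigma> j)} | j. j<n}" by (rule Mdef)
  qed
qed

lemma set_conv: "0 < n \<Longrightarrow> {F j | j. j < n} = {F (nat (x mod int n)) | x. True}"
proof
  assume n: "0 < n"
  show "{F j | j. j < n} \<subseteq> {F (nat (x mod int n)) | x. True}"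
  proof
    fix e assume "e \<in> {F j | j. j < n}"
    then obtain j where "e = F j" "j < n" by blast
    then have "e = F (nat (int j mod int n))" by (simp add: zmod_int[symmetric])
    then show "e \<in> {F (nat (x mod int n)) | x. True}" by blast
  qed
  show "{F (nat (x mod int n)) | x. True} \<subseteq> {F j | j. j < n}"
  proof
    fix e assume "e \<in> {F (nat (x mod int n)) | x. True}"
    then obtain x where "e = F (nat (x mod int n))" by blast
    moreover have "nat (x mod int n) < n" using n by (simp add: nat_less_iff)
    ultimately show "e \<in> {F j | j. j < n}" by blast
  qed
qed

lemma nat_succ_mod: "0 < n \<Longrightarrow> nat ((x + 1) mod int n) = (nat (x mod int n) + 1) mod n"
proof -
  assume n: "0 < n"
  have "int ((nat (x mod int n) + 1) mod n) = (int (nat (x mod int n)) + 1) mod int n" by (simp add: zmod_int add.commute)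
  also have "\<dots> = (x mod int n + 1) mod int n" using n by (simp add: add.commute)
  also have "\<dots> = (x + 1) mod int n" by (simp add: mod_add_left_eq)
  finally show ?thesis by (metis nat_int)
qed

lemma colour_mono:
  assumes sub: "E \<subseteq> E'" and col: "three_edge_colourable E'"
  shows "three_edge_colourable E"
proof -
  obtain c :: "'a set \<Rightarrow> nat" where c1: "\<forall>e\<in>E'. c e < 3"
    and c2: "\<forall>e\<in>E'. \<forall>e'\<in>E'. e \<noteq> e' \<and> e \<inter> e' \<noteq> {} \<longrightarrow> c e \<noteq> c e'"
    using col unfolding three_edge_colourable_def by (elim exE conjE)
  show ?thesis unfolding three_edge_colourable_def
  proof (intro exI[of _ c] conjI ballI impI)
    fix e assume "e \<in> E" then show "c e < 3" using sub c1 by blast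
  next
    fix e e' assume "e \<in> E" "e' \<in> E" "e \<noteq> e' \<and> e \<inter> e' \<noteq> {}"
    then show "c e \<noteq> c e'" using sub c2 by blast
  qed
qed

lemma to_pg:
  fixes n :: nat and fA fB :: "nat \<Rightarrow> 'a" and \<sigma> :: "nat \<Rightarrow> nat"
  assumes n3: "3 \<le> n" and nodd: "odd n" and injA: "inj_on fA {0..<n}" and injB: "inj_on fB {0..<n}"
    and AB: "\<forall>j<n. \<forall>l<n. fA j \<noteq> fB l" and V: "V = fA`{0..<n} \<union> fB`{0..<n}"
    and \<sigma>n: "\<forall>j<n. \<sigma> j < n" and inj\<sigma>: "inj_on \<sigma> {0..<n}"
    and E: "E = {{fA j, fA ((j+1) mod n)} | j. j<n} \<union> {{fB j, fB ((j+1) mod n)} | j. j<n} \<union> M"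
    and M: "M = {{fA j, fB (\<sigma> j)} | j. j<n}"
  shows "pg V E (int n) (\<lambda>x. fA (nat (x mod int n))) (\<lambda>x. fB (nat (x mod int n))) (\<lambda>x. int (\<sigma> (nat (x mod int n))))"
    and "M = {{fA (nat (x mod int n)), fB (nat (int (\<sigma> (nat (x mod int n))) mod int n))} | x. True}"
proof -
  have n0: "0 < n" using n3 by simp
  have nm: "nat (x mod int n) < n" for x using n0 by (simp add: nat_less_iff)
  have nat_eq: "nat (x mod int n) = nat (y mod int n) \<longleftrightarrow> x mod int n = y mod int n" for x y
    using n0 by (simp add: eq_nat_nat_iff)
  have sback: "nat (int (\<sigma> j) mod int n) = \<sigma> j" if "j < n" for j
    using \<sigma>n that by (simp add: zmod_int[symmetric])
  show M': "M = {{fA (nat (x mod int n)), fB (nat (int (\<sigma> (nat (x mod int n))) mod int n))} | x. True}"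
    unfolding M set_conv[OF n0, of "\<lambda>j. {fA j, fB (\<sigma> j)}"] using sback nm by simp
  show "pg V E (int n) (\<lambda>x. fA (nat (x mod int n))) (\<lambda>x. fB (nat (x mod int n))) (\<lambda>x. int (\<sigma> (nat (x mod int n))))"
  proof (unfold_locales)
    show "3 \<le> int n" using n3 by simp
    show "odd (int n)" using nodd by simp
    show "fA (nat (x mod int n)) = fA (nat (y mod int n)) \<longleftrightarrow> x mod int n = y mod int n" for x y
      using injA nm[of x] nm[of y] nat_eq[of x y] unfolding inj_on_def by auto
    show "fB (nat (x mod int n)) = fB (nat (y mod int n)) \<longleftrightarrow> x mod int n = y mod int n" for x y
      using injB nm[of x] nm[of y] nat_eq[of x y] unfolding inj_on_def by auto
    show "fA (nat (x mod int n)) \<noteq> fB (nat (y mod int n))" for x y using AB nm by blast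
    show "V = range (\<lambda>x. fA (nat (x mod int n))) \<union> range (\<lambda>x. fB (nat (x mod int n)))"
    proof -
      have "range (\<lambda>x. f (nat (x mod int n))) = f ` {0..<n}" for f :: "nat \<Rightarrow> 'a"
      proof
        show "range (\<lambda>x. f (nat (x mod int n))) \<subseteq> f ` {0..<n}" using nm by auto
        show "f ` {0..<n} \<subseteq> range (\<lambda>x. f (nat (x mod int n)))"
        proof
          fix v assume "v \<in> f ` {0..<n}"
          then obtain j where "j < n" "v = f j" by auto
          then have "v = f (nat (int j mod int n))" by (simp add: zmod_int[symmetric])
          then show "v \<in> range (\<lambda>x. f (nat (x mod int n)))" by blast
        qed
      qed
      then show ?thesis using V by simp
    qed
    show "int (\<sigma> (nat (x mod int n))) mod int n = int (\<sigma> (nat (y mod int n))) mod int n \<longleftrightarrow> x mod int n = y mod int n" for x y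
    proof -
      have "int (\<sigma> (nat (x mod int n))) mod int n = int (\<sigma> (nat (x mod int n)))" for x
        using \<sigma>n nm[of x] by simp
      then have "int (\<sigma> (nat (x mod int n))) mod int n = int (\<sigma> (nat (y mod int n))) mod int n
         \<longleftrightarrow> \<sigma> (nat (x mod int n)) = \<sigma> (nat (y mod int n))" by simp
      also have "\<dots> \<longleftrightarrow> nat (x mod int n) = nat (y mod int n)"
        using inj\<sigma> nm[of x] nm[of y] unfolding inj_on_def by auto
      finally show ?thesis using nat_eq by simp
    qed
    show "\<exists>x. int (\<sigma> (nat (x mod int n))) mod int n = y mod int n" for y
    proof -
      have "\<sigma> ` {0..<n} = {0..<n}" by (rule endo_inj_surj) (use \<sigma>n inj\<sigma> in auto)
      moreover have "nat (y mod int n) \<in> {0..<n}" using nm by simp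
      ultimately obtain j where j: "j < n" "\<sigma> j = nat (y mod int n)" by (metis atLeastLessThan_iff imageE)
      have "int (\<sigma> (nat (int j mod int n))) mod int n = y mod int n"
        using j n0 by (simp add: zmod_int[symmetric])
      then show ?thesis by blast
    qed
    show "E = {{fA (nat (x mod int n)), fA (nat ((x + 1) mod int n))} |x. True} \<union>
       {{fB (nat (x mod int n)), fB (nat ((x + 1) mod int n))} |x. True} \<union>
       {{fA (nat (x mod int n)), fB (nat (int (\<sigma> (nat (x mod int n))) mod int n))} |x. True}"
      unfolding E M'[symmetric] set_conv[OF n0, of "\<lambda>j. {fA j, fA ((j+1) mod n)}"]
        set_conv[OF n0, of "\<lambda>j. {fB j, fB ((j+1) mod n)}"]
      using nat_succ_mod[OF n0] by simp
  qed
qed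

theorem mainTheorem3:
  fixes V :: "'a set" and E :: "'a set set"
  assumes "permutation_graph V E \<or> near_permutation_graph V E"
    and "2 * odd_girth V E = enat (card V)"
    and "\<not> three_edge_colourable E"
  shows "graph_iso V E petersen_V petersen_E \<or>
         (\<exists>e\<in>petersen_E. graph_iso V E petersen_V (petersen_E - {e}))"
proof -
  obtain E' M where pw: "permutation_graph_wrt V E' M" and EE: "E = E' \<or> (\<exists>e\<in>M. E = E' - {e})"
    using assms(1) unfolding permutation_graph_def near_permutation_graph_def by blast
  obtain n fA fB \<sigma> where cV: "card V = 2*n" and n3: "3 \<le> n" and injA: "inj_on fA {0..<n}"
    and injB: "inj_on fB {0..<n}" and AB: "\<forall>j<n. \<forall>l<n. fA j \<noteq> fB l"
    and Vd: "V = fA`{0..<n} \<union> fB`{0..<n}" and \<sigma>n: "\<forall>j<n. \<sigma> j < n" and inj\<sigma>: "inj_on \<sigma> {0..<n}"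
    and Ed: "E' = {{fA j, fA ((j+1) mod n)} | j. j<n} \<union> {{fB j, fB ((j+1) mod n)} | j. j<n} \<union> M"
    and Md: "M = {{fA j, fB (\<sigma> j)} | j. j<n}"
    by (rule extract_pg[OF pw])
  define P where "P m \<longleftrightarrow> odd m \<and> has_cycle V E m" for m
  have exP: "\<exists>m. P m"
  proof (rule ccontr)
    assume "\<not> (\<exists>m. P m)"
    then have "odd_girth V E = \<infinity>" unfolding odd_girth_def P_def by auto
    moreover have "(2::enat) * \<infinity> = \<infinity>" by (simp add: imult_is_infinity)
    ultimately show False using assms(2) by simp
  qed
  have "odd_girth V E = enat (LEAST m. P m)" using exP unfolding odd_girth_def P_def by auto
  then have "enat (2 * (LEAST m. P m)) = enat (2 * n)" using assms(2) cV by (simp add: numeral_eq_enat)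
  then have L: "(LEAST m. P m) = n" by simp
  have nodd: "odd n" using LeastI_ex[OF exP] L unfolding P_def by simp
  have og: "n \<le> m" if "odd m" "has_cycle V E m" for m
    using Least_le[of P m] L that unfolding P_def by simp
  define a where "a x = fA (nat (x mod int n))" for x
  define b where "b x = fB (nat (x mod int n))" for x
  define s where "s x = int (\<sigma> (nat (x mod int n)))" for x
  have pgi: "pg V E' (int n) a b s" unfolding a_def b_def s_def
    by (rule to_pg(1)[OF n3 nodd injA injB AB Vd \<sigma>n inj\<sigma> Ed Md])
  have Mx: "M = {{a x, b (s x)} | x. True}" unfolding a_def b_def s_def
    by (rule to_pg(2)[OF n3 nodd injA injB AB Vd \<sigma>n inj\<sigma> Ed Md])
  interpret G: pg V E' "int n" a b s by (rule pgi)
  obtain r where sub: "E' - {{a r, b (s r)}} \<subseteq> E" and Esub: "E \<subseteq> E'"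
    and Ec: "E = E' \<or> E = E' - {{a r, b (s r)}}"
  proof (cases "E = E'")
    case True then show ?thesis using that[of 0] by blast
  next
    case False
    then obtain e where "e \<in> M" "E = E' - {e}" using EE by blast
    moreover then obtain r where "e = {a r, b (s r)}" using Mx by blast
    ultimately show ?thesis using that[of r] by blast
  qed
  have og': "nat (int n) \<le> m" if "odd m" "has_cycle V E m" for m using og[OF that] by simp
  show ?thesis
  proof (cases "\<exists>i. int n dvd s (i+1) - s i - 1 \<or> int n dvd s i - s (i+1) - 1")
    case True
    then obtain i where "int n dvd s (i+1) - s i - 1 \<or> int n dvd s i - s (i+1) - 1" by blast
    then have "b (s (i+1)) = b (s i + 1) \<or> b (s i) = b (s (i+1) + 1)"
      by (simp add: G.b_dvd algebra_simps)
    then have "three_edge_colourable E'" by (rule G.colour4)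
    then have "three_edge_colourable E" using colour_mono[OF Esub] by blast
    then show ?thesis using assms(3) by blast
  next
    case False
    then have no4: "\<not> int n dvd s (i+1) - s i - 1 \<and> \<not> int n dvd s i - s (i+1) - 1" for i by blast
    have "n = 3 \<or> n = 5 \<or> 7 \<le> n" using n3 nodd by presburger
    moreover have False if "n = 3"
      using G.k3case[of] no4 that by simp
    moreover have False if "7 \<le> n"
      using G.big[OF sub og'] no4 that by simp
    moreover have ?thesis if n5: "n = 5"
    proof -
      have k5: "int n = 5" using n5 by simp
      obtain d where dS: "d = 2 \<or> d = 3" and sd: "\<forall>m::nat. int n dvd s (int m) - s 0 - d * int m"
        using G.k5struct[OF k5] no4 by blast
      obtain \<phi> where bij: "bij_betw \<phi> V {0..<10}"
        and ed: "\<forall>u\<in>V. \<forall>v\<in>V. {u,v} \<in> E' \<longleftrightarrow> {\<phi> u, \<phi> v} \<in> petersen_E"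
        using G.k5iso[OF k5 dS sd] by blast
      from Ec show ?thesis
      proof
        assume "E = E'"
        then have "graph_iso V E petersen_V petersen_E"
          unfolding graph_iso_def petersen_V_def using bij ed by blast
        then show ?thesis by blast
      next
        assume Er: "E = E' - {{a r, b (s r)}}"
        have uv: "a r \<in> V" "b (s r) \<in> V" by (simp_all add: G.V_def)
        have "{a r, b (s r)} \<in> E'" by (rule G.EM_in)
        then have inP: "{\<phi> (a r), \<phi> (b (s r))} \<in> petersen_E" using ed uv by blast
        have "graph_iso V E petersen_V (petersen_E - {{\<phi> (a r), \<phi> (b (s r))}})"
          unfolding graph_iso_def petersen_V_def Er using bij iso_minus[OF bij ed uv] by blast
        then show ?thesis using inP by blast
      qed
    qed
    ultimately show ?thesis by blast
  qed
qed

end
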